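(* For every integer $r\ge 1$, $$\sum_{n=1}^{\infty}\frac{n4^n}{(4n^2-1)(4n+2r+1)}\frac{\binom{2n}{n}}{\binom{4n+2r}{2n+r}}=\frac{1}{\sqrt{2}}\sum_{k=0}^{r-1}\frac{(-1)^k}{(2k+1)2^{2r-k+1}}\binom{r-1}{k}\mathcal{B}(k)-\frac{\varphi(2r+1)}{2^{2r+2}},$$ where $\mathcal{B}(k)=\int_0^{1/2}\frac{t^k}{\sqrt{1-t}}\,\mathrm{d}t$ and $\varphi(2k+1)=\int_0^1 t^{2k+1}\sqrt{1+t^2}\,\mathrm{d}t$. *)

theory Defs
  imports "HOL-Analysis.Analysis"
begin

definition calB :: "nat \<Rightarrow> real" where
  "calB k = integral {0..1/2} (\<lambda>t. t ^ k / sqrt (1 - t))"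

definition phi :: "nat \<Rightarrow> real" where
  "phi m = integral {0..1} (\<lambda>t. t ^ m * sqrt (1 + t\<^sup>2))"

end

theory Submission
  imports Defs
begin

definition bb :: "nat \<Rightarrow> real" where "bb n = real ((2*n) choose n) / 4^n"

lemma central_nat: "(n+1) * ((2*n+2) choose (n+1)) = 2*(2*n+1) * ((2*n) choose n)"
proof -
  define X where "X = (2*n+2) choose (n+1)"
  define Y where "Y = (2*n+1) choose (n+1)"
  define Z where "Z = (2*n) choose n"
  have a0: "Suc n * (Suc (2*n+1) choose Suc n) = Suc (2*n+1) * ((2*n+1) choose n)"
    by (rule Suc_times_binomial)
  have b: "(2*n+1) choose n = (2*n+1) choose (n+1)"
    using binomial_symmetric[of n "2*n+1"] by simp
  have a: "(n+1) * X = (2*n+2) * Y"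
    using a0 unfolding X_def Y_def b[symmetric] by (simp only: Suc_eq_plus1 add.assoc one_add_one)
  have c0: "Suc n * (Suc (2*n) choose Suc n) = Suc (2*n) * ((2*n) choose n)"
    by (rule Suc_times_binomial)
  have c: "(n+1) * Y = (2*n+1) * Z"
    using c0 unfolding Y_def Z_def by (simp only: Suc_eq_plus1)
  have "(n+1) * ((n+1) * X) = (n+1) * (2*(2*n+1) * Z)"
  proof -
    have "(n+1) * ((n+1) * X) = (2*n+2) * ((n+1) * Y)" using a by (simp add: ac_simps)
    also have "\<dots> = (2*n+2) * ((2*n+1) * Z)" using c by simp
    also have "\<dots> = (n+1) * (2*(2*n+1) * Z)" by (simp add: algebra_simps)
    finally show ?thesis .
  qed
  moreover have h: "n+1 \<noteq> 0" by simp
  ultimately have "(n+1) * X = 2*(2*n+1) * Z" by (metis mult_left_cancel)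
  then show ?thesis unfolding X_def Z_def .
qed

lemma bb_0 [simp]: "bb 0 = 1" by (simp add: bb_def)

lemma bb_Suc: "bb (Suc n) = bb n * (2 * real n + 1) / (2 * real n + 2)"
proof -
  define Z where "Z = (2*n) choose n"
  define X where "X = (2*n+2) choose (n+1)"
  have cn: "real (n+1) * real X = 2*(2*real n+1) * real Z"
    using arg_cong[OF central_nat[of n, folded X_def Z_def], of real]
    by (simp only: of_nat_mult of_nat_add of_nat_1 of_nat_numeral)
  have bS: "bb (Suc n) = real X / 4^(n+1)"
  proof -
    have "2 * Suc n = 2*n+2" by simp
    then show ?thesis unfolding bb_def X_def by (simp only: Suc_eq_plus1)
  qed
  have bn: "bb n = real Z / 4^n" unfolding bb_def Z_def ..
  have n1: "real n + 1 \<noteq> 0" by linarith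
  have xe: "real X = 2*(2*real n+1) * real Z / (real n + 1)"
    using cn n1 by (simp add: eq_divide_eq mult.commute add.commute)
  have g: "\<And>Z q m::real. q \<noteq> 0 \<Longrightarrow> m + 1 \<noteq> 0 \<Longrightarrow> 2*m+2 \<noteq> 0 \<Longrightarrow>
      (2*(2*m+1)*Z/(m+1)) / (4*q) = Z/q * (2*m+1)/(2*m+2)"
  proof -
    fix Z q m :: real assume a: "q \<noteq> 0" "m + 1 \<noteq> 0" "2*m+2 \<noteq> 0"
    have "(2*(2*m+1)*Z/(m+1)) / (4*q) = (2*(2*m+1)*Z) / ((m+1)*(4*q))"
      by (simp add: divide_divide_eq_left)
    also have "\<dots> = (Z*(2*m+1)) / (q*(2*m+2))"
      using a by (subst frac_eq_eq) (simp_all, algebra)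
    also have "\<dots> = Z/q * (2*m+1)/(2*m+2)" by simp
    finally show "(2*(2*m+1)*Z/(m+1)) / (4*q) = Z/q * (2*m+1)/(2*m+2)" .
  qed
  have "bb (Suc n) = (2*(2*real n+1) * real Z / (real n + 1)) / (4 * 4^n)"
    unfolding bS xe by simp
  also have "\<dots> = real Z / 4^n * (2*real n+1)/(2*real n+2)"
    by (rule g) (simp, linarith, linarith)
  finally show ?thesis unfolding bn .
qed


lemma bb_nonneg: "bb n \<ge> 0" by (simp add: bb_def)

lemma bb_le1: "bb n \<le> 1"
proof (induction n)
  case (Suc n)
  have "bb (Suc n) \<le> bb n" unfolding bb_Suc using bb_nonneg[of n]
    by (simp add: divide_le_eq mult_left_mono)
  then show ?case using Suc by simp
qed simp

lemma gch_step: "real (Suc k) * (a gchoose Suc k) = (a - real k) * (a gchoose k)"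
  using gbinomial_absorption[of k a] gbinomial_absorb_comp[of a k] by simp

lemma gch_neg_half: "((-1/2::real) gchoose n) = (-1)^n * bb n"
proof (induction n)
  case (Suc n)
  have "real (Suc n) * ((-1/2::real) gchoose Suc n) = (-1/2 - real n) * ((-1)^n * bb n)"
    using gch_step[of n "-1/2::real"] Suc by simp
  then show ?case unfolding bb_Suc by (simp add: field_simps)
qed simp

lemma gch_half: "((1/2::real) gchoose n) = (-1)^n * bb n / (1 - 2 * real n)"
proof (induction n)
  case (Suc n)
  have ne: "1 - 2 * real n \<noteq> 0"
  proof
    assume "1 - 2 * real n = 0"
    then have "real (2*n) = 1" by simp
    then have "2*n = 1" by linarith
    then show False by presburger
  qed
  have "real (Suc n) * ((1/2::real) gchoose Suc n) = (1/2 - real n) * ((-1)^n * bb n / (1 - 2 * real n))"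
    using gch_step[of n "1/2::real"] Suc by simp
  also have "\<dots> = (-1)^n * bb n / 2" using ne by (simp add: field_simps)
  finally have "((1/2::real) gchoose Suc n) = (-1)^n * bb n / (2 * real n + 2)"
    by (simp add: field_simps)
  moreover have "(-1)^(Suc n) * bb (Suc n) / (1 - 2 * real (Suc n)) = (-1)^n * bb n / (2 * real n + 2)"
  proof -
    have e: "1 - 2 * real (Suc n) = -(2*real n+1)" by simp
    have h: "\<And>a c x y::real. a \<noteq> 0 \<Longrightarrow> -y * (x * a / c) / (- a) = y*x/c"
      by (simp add: field_simps)
    have "(2*real n+1) \<noteq> 0" by (simp add: add_nonneg_eq_0_iff)
    from h[OF this, of "(-1)^n" "bb n" "2 * real n + 2"] show ?thesis
      unfolding bb_Suc e by simp
  qed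
  ultimately show ?case by simp
qed simp


lemma neg1_sq: "(-1::real)^n * (-1)^n = 1" by (induction n) auto

lemma negsq_pow: "(-((v::real)^2))^n = (-1)^n * v^(2*n)"
  by (simp add: power_minus[of "v^2"] power_mult)

lemma inv_sqrt_series:
  fixes v :: real assumes "\<bar>v\<bar> < 1"
  shows "(\<lambda>n. bb n * v^(2*n)) sums (1 / sqrt (1 - v^2))"
proof -
  have z: "\<bar>-(v^2)\<bar> < 1" using assms by (simp add: abs_square_less_1)
  have pos: "1 - v^2 > 0" using assms by (simp add: abs_square_less_1)
  have "(\<lambda>n. ((-1/2::real) gchoose n) * (-(v^2))^n) sums (1 + -(v^2)) powr (-1/2)"
    by (rule gen_binomial_real[OF z])
  moreover have "((-1/2::real) gchoose n) * (-(v^2))^n = bb n * v^(2*n)" for n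
    unfolding gch_neg_half negsq_pow using neg1_sq[of n] by (simp add: mult_ac)
  moreover have "(1 + -(v^2)) powr (-1/2) = 1 / sqrt (1 - v^2)"
    using pos by (simp add: powr_minus_divide powr_half_sqrt)
  ultimately show ?thesis by simp
qed

lemma sqrt_series2:
  fixes v :: real assumes "\<bar>v\<bar> < 1"
  shows "(\<lambda>n. bb n / (1 - 2 * real n) * v^(2*n)) sums (sqrt (1 - v^2))"
proof -
  have z: "\<bar>-(v^2)\<bar> < 1" using assms by (simp add: abs_square_less_1)
  have "(\<lambda>n. ((1/2::real) gchoose n) * (-(v^2))^n) sums sqrt (1 + -(v^2))"
    by (rule sqrt_series[OF z])
  moreover have "((1/2::real) gchoose n) * (-(v^2))^n = bb n / (1 - 2 * real n) * v^(2*n)" for n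
    unfolding gch_half negsq_pow using neg1_sq[of n] by (simp add: mult_ac)
  ultimately show ?thesis by simp
qed


lemma arcsin_series:
  fixes v :: real assumes v: "\<bar>v\<bar> < 1"
  shows "(\<lambda>n. bb n * v^(2*n+1) / (2*real n+1)) sums arcsin v"
proof -
  define a where "a = (1 + \<bar>v\<bar>) / 2"
  have a1: "a < 1" and a0: "\<bar>v\<bar> \<le> a" "0 \<le> a" using v by (auto simp: a_def)
  define S where "S = {-a..a}"
  have cS: "convex S" by (simp add: S_def)
  have xS: "\<bar>x\<bar> \<le> a" if "x \<in> S" for x using that by (auto simp: S_def)
  have der: "((\<lambda>x. bb n * x^(2*n+1) / (2*real n+1)) has_field_derivative bb n * x^(2*n)) (at x within S)"
    for n x
  proof -
    have ne: "2 * real n + 1 \<noteq> 0" by linarith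
    have "((\<lambda>s. s^(2*n+1)) has_real_derivative real (2*n+1) * x^(2*n)) (at x within S)"
      using DERIV_pow[of "2*n+1" x S] by simp
    then have "((\<lambda>x. bb n * x^(2*n+1) / (2*real n+1)) has_real_derivative
        bb n * (real (2*n+1) * x^(2*n)) / (2*real n+1)) (at x within S)"
      by (intro DERIV_cdivide DERIV_cmult)
    moreover have "bb n * (real (2*n+1) * x^(2*n)) / (2*real n+1) = bb n * x^(2*n)"
    proof -
      have e: "real (2*n+1) = 2*real n+1" by simp
      have g: "\<And>a b y::real. b \<noteq> 0 \<Longrightarrow> a*(b*y)/b = a*y" by simp
      show ?thesis unfolding e by (rule g[OF ne])
    qed
    ultimately show ?thesis by simp
  qed
  have ul: "uniform_limit S (\<lambda>n x. \<Sum>i<n. bb i * x^(2*i)) (\<lambda>x. suminf (\<lambda>i. bb i * x^(2*i))) sequentially"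
  proof (rule Weierstrass_m_test)
    show "norm (bb n * x^(2*n)) \<le> (a^2)^n" if "x \<in> S" for n x
    proof -
      have "norm (bb n * x^(2*n)) = bb n * \<bar>x\<bar>^(2*n)"
        using bb_nonneg[of n] by (simp add: abs_mult power_abs)
      also have "\<dots> \<le> 1 * a^(2*n)"
        using bb_le1[of n] bb_nonneg[of n] xS[OF that]
        by (intro mult_mono power_mono) auto
      finally show ?thesis by (simp add: power_mult)
    qed
    show "summable (\<lambda>n. (a^2)^n)"
      using a1 a0 by (intro summable_geometric) (simp add: abs_square_less_1)
  qed
  have "0 \<in> S" using a0 by (simp add: S_def)
  then obtain g where g: "\<And>x. x \<in> S \<Longrightarrow> (\<lambda>n. bb n * x^(2*n+1) / (2*real n+1)) sums g x \<and>
      (g has_field_derivative (\<Sum>i. bb i * x^(2*i))) (at x within S)"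
    using has_field_derivative_series[OF cS der ul, of 0] by auto
  have dd: "((\<lambda>x. g x - arcsin x) has_field_derivative 0) (at x within S)" if "x \<in> S" for x
  proof -
    have xa: "\<bar>x\<bar> < 1" using xS[OF that] a1 by simp
    have "(\<Sum>i. bb i * x^(2*i)) = 1 / sqrt (1 - x^2)"
      using inv_sqrt_series[OF xa] by (simp add: sums_iff)
    then have "(g has_field_derivative 1 / sqrt (1 - x^2)) (at x within S)" using g[OF that] by simp
    moreover have "(arcsin has_field_derivative 1 / sqrt (1 - x^2)) (at x within S)"
      using DERIV_arcsin[of x] xa by (auto intro: has_field_derivative_at_within simp: divide_inverse)
    ultimately show ?thesis using DERIV_diff by fastforce
  qed
  obtain c where c: "\<And>x. x \<in> S \<Longrightarrow> g x - arcsin x = c"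
    using has_field_derivative_zero_constant[OF cS dd] by blast
  have "g 0 = 0" using g[OF \<open>0 \<in> S\<close>] by (simp add: sums_iff)
  then have "c = 0" using c[OF \<open>0 \<in> S\<close>] by simp
  have "v \<in> S" using a0 by (auto simp: S_def)
  then show ?thesis using g[of v] c[of v] \<open>c = 0\<close> by simp
qed


lemma W_step_deriv:
  fixes x :: real
  shows "((\<lambda>s. s * (1 - s^2)^(m+1)) has_real_derivative
           ((2*real m+3) * (1-x^2)^(m+1) - (2*real m+2) * (1-x^2)^m)) (at x within S)"
proof -
  have e: "(1-x^2)^(m+1) = (1-x^2) * (1-x^2)^m" by simp
  show ?thesis
    apply (rule derivative_eq_intros refl)+
    apply (simp only: e)
    apply (simp add: algebra_simps power2_eq_square)
    done
qed

lemma W_int: "((\<lambda>s::real. (1-s^2)^m) has_integral (1/((2*real m+1)*bb m))) {0..1}"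
proof (induction m)
  case 0
  show ?case using has_integral_const_real[of "1::real" 0 1] by simp
next
  case (Suc m)
  define X where "X = 1/((2*real m+1)*bb m)"
  have ftc: "((\<lambda>x. (2*real m+3) * (1-x^2)^(m+1) - (2*real m+2) * (1-x^2)^m) has_integral
      (1 * (1 - 1^2)^(m+1) - 0 * (1-0^2)^(m+1))) {0..1::real}"
  proof (rule fundamental_theorem_of_calculus[where f="\<lambda>s. s * (1 - s^2)^(m+1)"])
    fix x :: real assume "x \<in> {0..1}"
    show "((\<lambda>s. s * (1 - s^2)^(m+1)) has_vector_derivative
        ((2*real m+3) * (1-x^2)^(m+1) - (2*real m+2) * (1-x^2)^m)) (at x within {0..1})"
      unfolding has_real_derivative_iff_has_vector_derivative[symmetric] by (rule W_step_deriv)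
  qed simp
  have h2: "((\<lambda>x. (2*real m+2) * (1-x^2)^m) has_integral ((2*real m+2) * X)) {0..1::real}"
    using has_integral_mult_right[OF Suc[folded X_def], of "2*real m+2"] .
  have "((\<lambda>x. ((2*real m+3) * (1-x^2)^(m+1) - (2*real m+2) * (1-x^2)^m) + (2*real m+2) * (1-x^2)^m)
     has_integral (0 + (2*real m+2) * X)) {0..1::real}"
    using has_integral_add[OF ftc h2] by simp
  then have "((\<lambda>x. (2*real m+3) * (1-x^2)^(m+1)) has_integral ((2*real m+2) * X)) {0..1::real}"
    by simp
  from has_integral_mult_right[OF this, of "1/(2*real m+3)"]
  have h: "((\<lambda>x. 1/(2*real m+3) * ((2*real m+3) * (1-x^2)^(m+1))) has_integral (1/(2*real m+3) * ((2*real m+2) * X))) {0..1::real}" .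
  have ne: "2*real m+3 \<noteq> 0" by linarith
  have eq: "\<And>x::real. 1/(2*real m+3) * ((2*real m+3) * (1-x^2)^(m+1)) = (1-x^2)^(m+1)"
    using ne by simp
  have eq2: "1/(2*real m+3) * ((2*real m+2) * X) = (2*real m+2) * X / (2*real m+3)" by simp
  from h have "((\<lambda>x. (1-x^2)^(m+1)) has_integral ((2*real m+2) * X / (2*real m+3))) {0..1::real}"
    unfolding eq eq2 .
  moreover have "(2*real m+2) * X / (2*real m+3) = 1/((2*real (Suc m)+1)*bb (Suc m))"
    unfolding X_def bb_Suc using bb_nonneg[of m]
    by (cases "bb m = 0") (simp_all add: field_simps)
  ultimately show ?case by simp
qed


definition cc :: "nat \<Rightarrow> real" where "cc n = bb n * (4 * real n) / (4 * real n ^ 2 - 1)"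

definition Kf :: "nat \<Rightarrow> real \<Rightarrow> real" where
  "Kf r s = (1-s^2)^(r-1) * arcsin (1-s^2) - (1-s^2)^r * (s * sqrt (2-s^2))"

lemma cc_nonneg: "cc (Suc n) \<ge> 0"
proof -
  have "4 * real (Suc n) ^ 2 - 1 > 0"
  proof -
    have "real (Suc n) \<ge> 1" by simp
    then have h: "real (Suc n) ^ 2 \<ge> 1" by (rule one_le_power)
    show ?thesis using h by linarith
  qed
  then show ?thesis unfolding cc_def using bb_nonneg[of "Suc n"] by simp
qed

lemma K_series:
  fixes s :: real
  assumes r: "r \<ge> 1" and s: "0 < s" "s < 1"
  shows "(\<lambda>n. cc (n+1) * (1-s^2)^(r+2*n+2)) sums Kf r s"
proof -
  define v where "v = 1 - s^2"
  have v0: "0 \<le> v" and v1: "v < 1" using s by (auto simp: v_def power_le_one abs_square_le_1)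
  have va: "\<bar>v\<bar> < 1" using v0 v1 by simp
  have sq: "sqrt (1 - v^2) = s * sqrt (2 - s^2)"
  proof -
    have "1 - v^2 = s^2 * (2 - s^2)" by (simp add: v_def power2_eq_square algebra_simps)
    then show ?thesis using s by (simp add: real_sqrt_mult)
  qed
  have A: "(\<lambda>n. bb n * v^(2*n+1) / (2*real n+1) * v^(r-1)) sums (arcsin v * v^(r-1))"
    by (rule sums_mult2[OF arcsin_series[OF va]])
  have B: "(\<lambda>n. bb n / (1 - 2 * real n) * v^(2*n) * v^r) sums (sqrt (1 - v^2) * v^r)"
    by (rule sums_mult2[OF sqrt_series2[OF va]])
  define d where "d n = bb n * v^(2*n+1) / (2*real n+1) * v^(r-1) - bb n / (1 - 2 * real n) * v^(2*n) * v^r" for n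
  have D: "d sums (arcsin v * v^(r-1) - sqrt (1 - v^2) * v^r)"
    unfolding d_def by (rule sums_diff[OF A B])
  have d0: "d 0 = 0" unfolding d_def using r by (simp add: power_Suc[symmetric])
  have dS: "d (Suc n) = cc (n+1) * v^(r+2*n+2)" for n
  proof -
    have p1: "v^(2*Suc n+1) * v^(r-1) = v^(r+2*n+2)"
    proof -
      have "2*Suc n+1 + (r-1) = r+2*n+2" using r by simp
      then show ?thesis by (metis power_add)
    qed
    have p2: "v^(2*Suc n) * v^r = v^(r+2*n+2)" by (simp add: power_add[symmetric] add_ac)
    have n1: "2 * real n + 3 \<noteq> 0" "2 * real n + 1 \<noteq> 0" by linarith+
    have e: "1 / (2 * real (Suc n) + 1) - 1 / (1 - 2 * real (Suc n)) = 4 * real (Suc n) / (4 * real (Suc n)^2 - 1)"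
    proof -
      have g: "\<And>a::real. a \<ge> 1 \<Longrightarrow> 1 / (2*a+1) - 1 / (1-2*a) = 4*a / (4*a^2-1)"
      proof -
        fix a :: real assume a: "a \<ge> 1"
        have h1: "2*a+1 \<noteq> 0" "1-2*a \<noteq> 0" using a by linarith+
        have h2: "4*a^2-1 = (2*a+1)*(2*a-1)" by (simp add: power2_eq_square algebra_simps)
        have h3: "2*a-1 \<noteq> 0" using a by linarith
        have m: "1-2*a = -(2*a-1)" by simp
        have "1 / (2*a+1) - 1 / (1-2*a) = 1 / (2*a+1) + 1 / (2*a-1)"
          by (simp only: m divide_minus_right diff_minus_eq_add)
        also have "\<dots> = (1 * (2*a-1) + 1 * (2*a+1)) / ((2*a+1)*(2*a-1))"
          by (rule add_frac_eq[OF h1(1) h3])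
        also have "\<dots> = 4*a / (4*a^2-1)" unfolding h2 by simp
        finally show "1 / (2*a+1) - 1 / (1-2*a) = 4*a / (4*a^2-1)" .
      qed
      show ?thesis by (rule g) simp
    qed
    have "d (Suc n) = bb (Suc n) * v^(r+2*n+2) * (1 / (2 * real (Suc n) + 1) - 1 / (1 - 2 * real (Suc n)))"
    proof -
      have g: "\<And>b x y p q V A C::real. x*p = V \<Longrightarrow> y*q = V \<Longrightarrow>
          b*x/A*p - b/C*y*q = b*V*(1/A - 1/C)"
      proof -
        fix b x y p q V A C :: real assume h1: "x*p = V" and h2: "y*q = V"
        have "b*x/A*p = b*(x*p)/A" by simp
        also have "\<dots> = b*V/A" by (simp only: h1)
        finally have e1: "b*x/A*p = b*V/A" .
        have "b/C*y*q = b*(y*q)/C" by simp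
        also have "\<dots> = b*V/C" by (simp only: h2)
        finally have e2: "b/C*y*q = b*V/C" .
        have e3: "b*V*(1/A - 1/C) = b*V/A - b*V/C" by (simp add: right_diff_distrib)
        show "b*x/A*p - b/C*y*q = b*V*(1/A - 1/C)" by (simp only: e1 e2 e3)
      qed
      show ?thesis unfolding d_def by (rule g[OF p1 p2])
    qed
    also have "\<dots> = cc (n+1) * v^(r+2*n+2)" unfolding e cc_def by simp
    finally show ?thesis .
  qed
  have "(\<lambda>n. d (Suc n)) sums (arcsin v * v^(r-1) - sqrt (1 - v^2) * v^r)"
    using D d0 by (simp add: sums_Suc_iff)
  then show ?thesis unfolding dS Kf_def sq[symmetric] v_def[symmetric] by (simp add: mult_ac)
qed


lemma J_int:
  "((\<lambda>s::real. s^(2*k+1) / sqrt (2 - s^2)) has_integral (2^k / sqrt 2 * calB k)) {0..1}"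
proof -
  have sub: "((\<lambda>x. x *\<^sub>R ((\<lambda>t. t^k / sqrt (1-t)) (x^2/2))) has_integral
       integral {(0::real)^2/2..1^2/2} (\<lambda>t. t^k / sqrt (1-t))) {0..1::real}"
  proof (rule has_integral_substitution[where c=0 and d="1/2"])
    show "(\<lambda>x::real. x^2/2) ` {0..1} \<subseteq> {0..1/2}"
      by (auto simp: power_le_one)
    show "continuous_on {0..1/2} (\<lambda>t::real. t^k / sqrt (1-t))"
      by (auto intro!: continuous_intros)
    show "((\<lambda>x. x^2/2) has_real_derivative x) (at x within {0..1})" for x :: real
      by (auto intro!: derivative_eq_intros)
  qed auto
  have i: "integral {(0::real)^2/2..1^2/2} (\<lambda>t. t^k / sqrt (1-t)) = calB k"
    by (simp add: calB_def)
  have pw: "x *\<^sub>R ((\<lambda>t. t^k / sqrt (1-t)) (x^2/2)) = sqrt 2 / 2^k * (x^(2*k+1) / sqrt (2 - x^2))"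
    if "x \<in> {0..1}" for x :: real
  proof -
    have x2: "x^2 \<le> 1" using that by (auto simp: power_le_one)
    have e1: "sqrt (1 - x^2/2) = sqrt (2 - x^2) / sqrt 2"
      by (simp add: real_sqrt_divide[symmetric] diff_divide_distrib)
    have e2: "(x^2/2)^k = x^(2*k) / 2^k" by (simp add: power_divide power_mult)
    have e3: "x * x^(2*k) = x^(2*k+1)" by simp
    have pos: "sqrt (2 - x^2) \<noteq> 0" using x2 by simp
    have g: "\<And>a b c d::real. b \<noteq> 0 \<Longrightarrow> c \<noteq> 0 \<Longrightarrow> d \<noteq> 0 \<Longrightarrow> x * (a / c / (b / d)) = d / c * (x*a / b)"
      by (simp add: field_simps)
    have "x *\<^sub>R ((\<lambda>t. t^k / sqrt (1-t)) (x^2/2)) = x * (x^(2*k) / 2^k / (sqrt (2 - x^2) / sqrt 2))"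
      by (simp only: e1 e2 real_scaleR_def)
    also have "\<dots> = sqrt 2 / 2^k * (x * x^(2*k) / sqrt (2 - x^2))"
      by (rule g[OF pos]) auto
    finally show ?thesis by (simp only: e3)
  qed
  have "((\<lambda>x. sqrt 2 / 2^k * (x^(2*k+1) / sqrt (2 - x^2))) has_integral calB k) {0..1::real}"
  proof -
    from sub have s': "((\<lambda>x. x *\<^sub>R ((\<lambda>t. t^k / sqrt (1-t)) (x^2/2))) has_integral calB k) {0..1::real}"
      by (simp only: i)
    show ?thesis using iffD1[OF has_integral_cong[OF pw] s'] .
  qed
  from has_integral_mult_right[OF this, of "2^k / sqrt 2"]
  have "((\<lambda>x. 2^k / sqrt 2 * (sqrt 2 / 2^k * (x^(2*k+1) / sqrt (2 - x^2)))) has_integral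
     (2^k / sqrt 2 * calB k)) {0..1::real}" .
  then show ?thesis by simp
qed


lemma phi_int:
  "((\<lambda>s::real. (1-s^2)^r * (s * sqrt (2 - s^2))) has_integral phi (2*r+1)) {0..1}"
proof -
  define h where "h v = v^r * sqrt (1+v)" for v :: real
  have hc: "continuous_on {0..1} h" unfolding h_def by (auto intro!: continuous_intros)
  define H where "H = integral {0..1} h"
  have s1: "((\<lambda>x. (2*x) *\<^sub>R h (x^2)) has_integral integral {(0::real)^2..1^2} h) {0..1::real}"
  proof (rule has_integral_substitution[where c=0 and d=1, OF _ _ _ hc])
    show "(\<lambda>x::real. x^2) ` {0..1} \<subseteq> {0..1}" by (auto simp: power_le_one)
    show "((\<lambda>x. x^2) has_real_derivative 2*x) (at x within {0..1})" for x :: real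
      by (auto intro!: derivative_eq_intros)
  qed auto
  have "((\<lambda>x. (2*x) * h (x^2)) has_integral H) {0..1::real}" using s1 by (simp add: H_def)
  moreover have "(2*x) * h (x^2) = 2 * (x^(2*r+1) * sqrt (1 + x^2))" for x :: real
    by (simp add: h_def power_mult[symmetric] mult_ac)
  ultimately have "((\<lambda>x. 2 * (x^(2*r+1) * sqrt (1 + x^2))) has_integral H) {0..1::real}" by simp
  from has_integral_mult_right[OF this, of "1/2"]
  have "((\<lambda>x. x^(2*r+1) * sqrt (1 + x^2)) has_integral H/2) {0..1::real}" by simp
  then have phiH: "phi (2*r+1) = H/2" unfolding phi_def by (rule integral_unique)
  have s2: "((\<lambda>x. (-2*x) *\<^sub>R h (1-x^2)) has_integral
      (integral {1-(0::real)^2..1-1^2} h - integral {1-(1::real)^2..1-0^2} h)) {0..1::real}"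
  proof (rule has_integral_substitution_general[where c=0 and d=1 and s="{}", OF _ _ _ hc])
    show "(\<lambda>x::real. 1-x^2) ` {0..1} \<subseteq> {0..1}" by (auto simp: power_le_one)
    show "continuous_on {0..1} (\<lambda>x::real. 1-x^2)" by (intro continuous_intros)
    show "((\<lambda>x. 1-x^2) has_real_derivative -2*x) (at x within {0..1})" for x :: real
      by (auto intro!: derivative_eq_intros)
  qed auto
  then have "((\<lambda>x. (-2*x) * h (1-x^2)) has_integral (-H)) {0..1::real}"
    unfolding H_def by simp
  from has_integral_mult_right[OF this, of "-1/2"]
  have "((\<lambda>x. x * h (1-x^2)) has_integral H/2) {0..1::real}" by simp
  moreover have "x * h (1-x^2) = (1-x^2)^r * (x * sqrt (2 - x^2))" for x :: real
    by (simp add: h_def mult_ac)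
  ultimately show ?thesis unfolding phiH by simp
qed


definition Qp :: "nat \<Rightarrow> real \<Rightarrow> real" where
  "Qp n s = (\<Sum>k=0..n. real (n choose k) * (-1)^k * s^(2*k+1) / (2*real k+1))"

lemma poly_binom: "(1 - s^2)^n = (\<Sum>k=0..n. real (n choose k) * (-1)^k * ((s::real)^2)^k)"
proof -
  have "(1 - s^2)^n = (-(s^2) + 1)^n" by simp
  also have "\<dots> = (\<Sum>k\<le>n. real (n choose k) * (-(s^2))^k * 1^(n-k))"
    by (rule binomial_ring)
  also have "\<dots> = (\<Sum>k=0..n. real (n choose k) * (-1)^k * (s^2)^k)"
    unfolding atLeast0AtMost by (intro sum.cong refl) (simp add: power_minus[of "s^2"] mult_ac)
  finally show ?thesis .
qed

lemma Qp_deriv: "(Qp n has_real_derivative (1 - x^2)^n) (at x)"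
proof -
  have "(Qp n has_real_derivative (\<Sum>k=0..n. real (n choose k) * (-1)^k * x^(2*k))) (at x)"
    unfolding Qp_def
  proof (rule DERIV_sum)
    fix k assume "k \<in> {0..n}"
    have ne: "2 * real k + 1 \<noteq> 0" by linarith
    show "((\<lambda>s. real (n choose k) * (-1)^k * s^(2*k+1) / (2*real k+1)) has_real_derivative
             real (n choose k) * (-1)^k * x^(2*k)) (at x)"
    proof -
      have "((\<lambda>s. s^(2*k+1)) has_real_derivative real (2*k+1) * x^(2*k+1-1)) (at x)"
        using DERIV_pow[of "2*k+1" x UNIV] by simp
      then have "((\<lambda>s. real (n choose k) * (-1)^k * s^(2*k+1) / (2*real k+1)) has_real_derivative
          real (n choose k) * (-1)^k * (real (2*k+1) * x^(2*k+1-1)) / (2*real k+1)) (at x)"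
        by (intro DERIV_cdivide DERIV_cmult)
      moreover have "real (n choose k) * (-1)^k * (real (2*k+1) * x^(2*k+1-1)) / (2*real k+1)
          = real (n choose k) * (-1)^k * x^(2*k)"
      proof -
        have e: "real (2*k+1) = 2*real k+1" by simp
        have e2: "x^(2*k+1-1) = x^(2*k)" by simp
        have g: "\<And>a b y::real. b \<noteq> 0 \<Longrightarrow> a*(b*y)/b = a*y" by simp
        show ?thesis unfolding e e2 by (rule g[OF ne])
      qed
      ultimately show ?thesis by simp
    qed
  qed
  then show ?thesis by (simp add: poly_binom power_mult)
qed

lemma Qp_0: "Qp n 0 = 0" unfolding Qp_def by simp

lemma A_int:
  "((\<lambda>s::real. (1-s^2)^n * arcsin (1-s^2)) has_integral
     (\<Sum>k=0..n. real (n choose k) * (-1)^k / (2*real k+1) * (2 * (2^k / sqrt 2 * calB k)))) {0..1}"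
proof -
  define F where "F s = Qp n s * arcsin (1 - s^2)" for s
  have contF: "continuous_on {0..1} F"
  proof -
    have "continuous_on {0..1} (Qp n)"
      using Qp_deriv by (meson DERIV_continuous continuous_at_imp_continuous_on)
    moreover have "continuous_on {0..1::real} (\<lambda>s. arcsin (1 - s^2))"
    proof (rule continuous_on_arcsin)
      show "continuous_on {0..1::real} (\<lambda>s. 1 - s^2)" by (intro continuous_intros)
      show "\<forall>s\<in>{0..1::real}. -1 \<le> 1 - s^2 \<and> 1 - s^2 \<le> 1"
      proof
        fix s :: real assume "s \<in> {0..1}"
        then have "s^2 \<le> 1" by (auto simp: power_le_one)
        then show "-1 \<le> 1 - s^2 \<and> 1 - s^2 \<le> 1" by simp
      qed
    qed
    ultimately show ?thesis unfolding F_def by (rule continuous_on_mult)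
  qed
  have derF: "(F has_real_derivative ((1-x^2)^n * arcsin (1-x^2) - 2 * Qp n x / sqrt (2 - x^2))) (at x)"
    if x: "x \<in> {0<..<1}" for x :: real
  proof -
    have x0: "0 < x" "x < 1" using x by auto
    have x2: "x^2 < 1" using x0 by (simp add: power_less_one_iff abs_square_less_1)
    have r1: "-1 < 1 - x^2" "1 - x^2 < 1" using x0 x2 by auto
    have da: "((\<lambda>s. arcsin (1 - s^2)) has_real_derivative inverse (sqrt (1 - (1-x^2)^2)) * (- (2*x))) (at x)"
      by (rule DERIV_chain2[where g="\<lambda>s. 1 - s^2" and x=x, OF DERIV_arcsin[OF r1]]) (auto intro!: derivative_eq_intros)
    have sq: "sqrt (1 - (1-x^2)^2) = x * sqrt (2 - x^2)"
    proof -
      have "1 - (1-x^2)^2 = x^2 * (2 - x^2)" by (simp add: power2_eq_square algebra_simps)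
      then show ?thesis using x0 by (simp add: real_sqrt_mult)
    qed
    have pos: "sqrt (2 - x^2) > 0" using x2 by simp
    have "(F has_real_derivative (1-x^2)^n * arcsin (1-x^2) + inverse (sqrt (1 - (1-x^2)^2)) * (- (2*x)) * Qp n x) (at x)"
      unfolding F_def by (rule DERIV_mult[OF Qp_deriv da])
    moreover have "inverse (sqrt (1 - (1-x^2)^2)) * (- (2*x)) * Qp n x = - (2 * Qp n x / sqrt (2 - x^2))"
      unfolding sq using x0 pos by (simp add: field_simps)
    ultimately show ?thesis by simp
  qed
  have ftc: "((\<lambda>x. (1-x^2)^n * arcsin (1-x^2) - 2 * Qp n x / sqrt (2 - x^2)) has_integral (F 1 - F 0)) {0..1::real}"
    by (rule fundamental_theorem_of_calculus_interior[OF _ contF])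
       (auto simp: has_real_derivative_iff_has_vector_derivative[symmetric] intro: derF)
  have F10: "F 1 - F 0 = 0" by (simp add: F_def Qp_0)
  have sumint: "((\<lambda>x. 2 * Qp n x / sqrt (2 - x^2)) has_integral
     (\<Sum>k=0..n. real (n choose k) * (-1)^k / (2*real k+1) * (2 * (2^k / sqrt 2 * calB k)))) {0..1::real}"
  proof -
    have "((\<lambda>x. \<Sum>k=0..n. real (n choose k) * (-1)^k / (2*real k+1) * (2 * (x^(2*k+1) / sqrt (2 - x^2)))) has_integral
     (\<Sum>k=0..n. real (n choose k) * (-1)^k / (2*real k+1) * (2 * (2^k / sqrt 2 * calB k)))) {0..1::real}"
      by (intro has_integral_sum has_integral_mult_right J_int) auto
    moreover have "(\<Sum>k=0..n. real (n choose k) * (-1)^k / (2*real k+1) * (2 * (x^(2*k+1) / sqrt (2 - x^2))))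
        = 2 * Qp n x / sqrt (2 - x^2)" for x :: real
      unfolding Qp_def sum_distrib_left sum_divide_distrib by (intro sum.cong refl) (simp add: field_simps)
    ultimately show ?thesis by simp
  qed
  from has_integral_add[OF ftc sumint] show ?thesis unfolding F10 by simp
qed


lemma Kf_int:
  assumes r: "r \<ge> 1"
  shows "((Kf r) has_integral
     ((\<Sum>k=0..r-1. real ((r-1) choose k) * (-1)^k / (2*real k+1) * (2 * (2^k / sqrt 2 * calB k)))
      - phi (2*r+1))) {0..1}"
proof -
  have "((\<lambda>s. (1-s^2)^(r-1) * arcsin (1-s^2) - (1-s^2)^r * (s * sqrt (2-s^2))) has_integral
     ((\<Sum>k=0..r-1. real ((r-1) choose k) * (-1)^k / (2*real k+1) * (2 * (2^k / sqrt 2 * calB k)))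
      - phi (2*r+1))) {0..1}"
    by (rule has_integral_diff[OF A_int phi_int])
  then show ?thesis unfolding Kf_def[abs_def] .
qed

lemma lhs_sums:
  assumes r: "r \<ge> 1"
  shows "(\<lambda>n. cc (n+1) * (1/((2*real (r+2*n+2)+1) * bb (r+2*n+2)))) sums
     ((\<Sum>k=0..r-1. real ((r-1) choose k) * (-1)^k / (2*real k+1) * (2 * (2^k / sqrt 2 * calB k)))
      - phi (2*r+1))"
proof -
  define IK where "IK = (\<Sum>k=0..r-1. real ((r-1) choose k) * (-1)^k / (2*real k+1) * (2 * (2^k / sqrt 2 * calB k)))
      - phi (2*r+1)"
  define S where "S = {0<..<(1::real)}"
  define f where "f k s = (\<Sum>n<k. cc (n+1) * (1-s^2)^(r+2*n+2))" for k s
  define w where "w n = cc (n+1) * (1/((2*real (r+2*n+2)+1) * bb (r+2*n+2)))" for n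
  have fint0: "(f k has_integral (\<Sum>n<k. w n)) {0..1}" for k
    unfolding f_def[abs_def] w_def
    by (intro has_integral_sum has_integral_mult_right W_int) auto
  have fint: "(f k has_integral (\<Sum>n<k. w n)) S" for k
    using fint0[of k] unfolding S_def by (simp add: has_integral_Icc_iff_Ioo)
  have KS: "(Kf r has_integral IK) S"
    using Kf_int[OF r] unfolding S_def IK_def by (simp add: has_integral_Icc_iff_Ioo)
  have vnn: "0 \<le> 1 - x^2" if "x \<in> S" for x :: real
  proof -
    have "x^2 \<le> 1" using that by (auto simp: S_def power_le_one)
    then show ?thesis by simp
  qed
  have tnn: "0 \<le> cc (n+1) * (1-x^2)^(r+2*n+2)" if "x \<in> S" for x n
    using cc_nonneg[of n] vnn[OF that] by simp
  have ser: "(\<lambda>n. cc (n+1) * (1-x^2)^(r+2*n+2)) sums Kf r x" if "x \<in> S" for x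
    using K_series[OF r] that by (auto simp: S_def)
  have mono: "f k x \<le> f (Suc k) x" if "x \<in> S" for k x
    unfolding f_def using tnn[OF that, of k] by simp
  have lim: "(\<lambda>k. f k x) \<longlonglongrightarrow> Kf r x" if "x \<in> S" for x
    using ser[OF that] unfolding f_def[abs_def] sums_def .
  have fle: "f k x \<le> Kf r x" if "x \<in> S" for k x
  proof -
    have "f k x \<le> (\<Sum>n. cc (n+1) * (1-x^2)^(r+2*n+2))"
      unfolding f_def using ser[OF that] tnn[OF that]
      by (intro sum_le_suminf) (auto simp: sums_iff)
    then show ?thesis using ser[OF that] by (simp add: sums_iff)
  qed
  have wnn: "0 \<le> w n" for n
    unfolding w_def using cc_nonneg[of n] bb_nonneg[of "r+2*n+2"] by simp
  have iv: "integral S (f k) = (\<Sum>n<k. w n)" for k using fint[of k] by (rule integral_unique)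
  have bnd: "bounded (range (\<lambda>k. integral S (f k)))"
    unfolding bounded_iff
  proof (intro exI ballI)
    fix y assume "y \<in> range (\<lambda>k. integral S (f k))"
    then obtain k where y: "y = (\<Sum>n<k. w n)" using iv by auto
    have "0 \<le> (\<Sum>n<k. w n)" using wnn by (simp add: sum_nonneg)
    moreover have "(\<Sum>n<k. w n) \<le> IK"
      by (rule has_integral_le[OF fint KS]) (rule fle)
    ultimately show "norm y \<le> IK" using y by simp
  qed
  have intS: "\<And>k. f k integrable_on S" using fint by blast
  from monotone_convergence_increasing[OF intS mono lim bnd]
  have "(\<lambda>k. integral S (f k)) \<longlonglongrightarrow> integral S (Kf r)" by blast
  moreover have "integral S (Kf r) = IK" using KS by (rule integral_unique)
  ultimately have "(\<lambda>k. \<Sum>n<k. w n) \<longlonglongrightarrow> IK" unfolding iv by simp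
  then show ?thesis unfolding sums_def w_def IK_def .
qed


lemma term_eq:
  "real (n + 1) * 4 ^ (n + 1)
              / ((4 * real (n + 1) ^ 2 - 1) * (4 * real (n + 1) + 2 * real r + 1))
              * (real ((2 * (n + 1)) choose (n + 1))
                 / real ((4 * (n + 1) + 2 * r) choose (2 * (n + 1) + r)))
   = cc (n+1) * (1/((2*real (r+2*n+2)+1) * bb (r+2*n+2))) / 4^(r+1)"
proof -
  define P where "P = real ((2 * (n + 1)) choose (n + 1))"
  define Q where "Q = real ((4 * (n + 1) + 2 * r) choose (2 * (n + 1) + r))"
  have e1: "2 * (r+2*n+2) = 4 * (n + 1) + 2 * r" by simp
  have bQ: "bb (r+2*n+2) = Q / 4^(r+2*n+2)"
  proof -
    have "bb (r+2*n+2) = real ((2 * (r+2*n+2)) choose (r+2*n+2)) / 4^(r+2*n+2)" by (rule bb_def)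
    also have "\<dots> = real ((4 * (n + 1) + 2 * r) choose (r+2*n+2)) / 4^(r+2*n+2)" by (simp only: e1)
    also have "(4 * (n + 1) + 2 * r) choose (r+2*n+2) = (4 * (n + 1) + 2 * r) choose (2 * (n + 1) + r)"
    proof -
      have e2: "r+2*n+2 = 2 * (n + 1) + r" by simp
      show ?thesis by (simp only: e2)
    qed
    finally show ?thesis unfolding Q_def .
  qed
  have bP: "bb (n+1) = P / 4^(n+1)" unfolding bb_def P_def ..
  have Q0: "Q \<noteq> 0" unfolding Q_def by simp
  have p: "(4::real)^(r+2*n+2) = 4^(n+1) * 4^(r+1) * 4^n"
    by (simp add: power_add[symmetric])
  have d1: "4 * real (n + 1) ^ 2 - 1 \<noteq> 0"
  proof -
    have "real (n+1) \<ge> 1" by simp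
    then have "real (n + 1) ^ 2 \<ge> 1" by (rule one_le_power)
    then show ?thesis by linarith
  qed
  have d2: "4 * real (n + 1) + 2 * real r + 1 \<noteq> 0" by linarith
  have d3: "2*real (r+2*n+2)+1 = 4 * real (n + 1) + 2 * real r + 1" by simp
  have g: "\<And>a P Q D E Y Z::real. Q \<noteq> 0 \<Longrightarrow> D \<noteq> 0 \<Longrightarrow> E \<noteq> 0 \<Longrightarrow> Y \<noteq> 0 \<Longrightarrow> Z \<noteq> 0 \<Longrightarrow>
     a * (4*Z) / (D * E) * (P / Q) = P / (4*Z) * (4 * a) / D * (1 / (E * (Q / ((4*Z) * Y * Z)))) / Y"
    by (simp add: field_simps)
  have p4: "(4::real)^(n+1) = 4 * 4^n" by simp
  show ?thesis
    unfolding cc_def bP bQ p d3 P_def[symmetric] Q_def[symmetric] p4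
    by (rule g[OF Q0 d1 d2]) simp_all
qed

lemma rhs_eq:
  assumes r: "r \<ge> 1"
  shows "((\<Sum>k=0..r-1. real ((r-1) choose k) * (-1)^k / (2*real k+1) * (2 * (2^k / sqrt 2 * calB k)))
      - phi (2*r+1)) / 4^(r+1)
   = 1 / sqrt 2 * (\<Sum>k = 0..r - 1. (-1) ^ k / ((2 * real k + 1) * 2 ^ (2 * r - k + 1))
                                        * real ((r - 1) choose k) * calB k)
          - phi (2 * r + 1) / 2 ^ (2 * r + 2)"
proof -
  have four: "(4::real)^(r+1) = 2^(2*r+2)"
  proof -
    have "(2::real)^(2*(r+1)) = 4^(r+1)" by (simp add: power_mult)
    moreover have "2*(r+1) = 2*r+2" by simp
    ultimately show ?thesis by simp
  qed
  have tk: "real ((r-1) choose k) * (-1)^k / (2*real k+1) * (2 * (2^k / sqrt 2 * calB k)) / 4^(r+1)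
      = 1 / sqrt 2 * ((-1) ^ k / ((2 * real k + 1) * 2 ^ (2 * r - k + 1)) * real ((r - 1) choose k) * calB k)"
    if k: "k \<in> {0..r-1}" for k
  proof -
    have ex: "(2::real)^(2*r+2) = 2^(2*r-k+1) * 2^(k+1)"
    proof -
      have "2*r+2 = (2*r-k+1) + (k+1)" using k r by auto
      then show ?thesis by (metis power_add)
    qed
    have nz: "(2::real)^(2*r-k+1) \<noteq> 0" "(2*real k+1) \<noteq> 0" "sqrt (2::real) \<noteq> 0" by simp_all
    have pk: "(2::real)^(k+1) = 2 * 2^k" by simp
    have g2: "\<And>C m d u V s B::real. d \<noteq> 0 \<Longrightarrow> u \<noteq> 0 \<Longrightarrow> V \<noteq> 0 \<Longrightarrow> s \<noteq> 0 \<Longrightarrow>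
        C*m/d*(2*(u/s*B))/(V*(2*u)) = 1/s*(m/(d*V)*C*B)"
      by (simp add: field_simps)
    show ?thesis unfolding four ex pk by (rule g2) (use nz in simp_all)
  qed
  have "(\<Sum>k=0..r-1. real ((r-1) choose k) * (-1)^k / (2*real k+1) * (2 * (2^k / sqrt 2 * calB k))) / 4^(r+1)
     = 1 / sqrt 2 * (\<Sum>k = 0..r - 1. (-1) ^ k / ((2 * real k + 1) * 2 ^ (2 * r - k + 1))
                                        * real ((r - 1) choose k) * calB k)"
    unfolding sum_divide_distrib sum_distrib_left by (rule sum.cong[OF refl tk])
  moreover have "phi (2*r+1) / 4^(r+1) = phi (2 * r + 1) / 2 ^ (2 * r + 2)" unfolding four ..
  ultimately show ?thesis by (simp add: diff_divide_distrib)
qed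

theorem theorem3p0p6:
  fixes r :: nat
  assumes "r \<ge> 1"
  shows "(\<lambda>n. real (n + 1) * 4 ^ (n + 1)
              / ((4 * real (n + 1) ^ 2 - 1) * (4 * real (n + 1) + 2 * real r + 1))
              * (real ((2 * (n + 1)) choose (n + 1))
                 / real ((4 * (n + 1) + 2 * r) choose (2 * (n + 1) + r))))
         sums
         (1 / sqrt 2 * (\<Sum>k = 0..r - 1. (-1) ^ k / ((2 * real k + 1) * 2 ^ (2 * r - k + 1))
                                        * real ((r - 1) choose k) * calB k)
          - phi (2 * r + 1) / 2 ^ (2 * r + 2))"
proof -
  have "(\<lambda>n. cc (n+1) * (1/((2*real (r+2*n+2)+1) * bb (r+2*n+2))) / 4^(r+1)) sums
     (((\<Sum>k=0..r-1. real ((r-1) choose k) * (-1)^k / (2*real k+1) * (2 * (2^k / sqrt 2 * calB k)))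
      - phi (2*r+1)) / 4^(r+1))"
    by (rule sums_divide[OF lhs_sums[OF assms]])
  then show ?thesis unfolding term_eq rhs_eq[OF assms] .
qed


end
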